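(* Let $G$ be a simple undirected graph (no loops, no multiple edges) with vertex set $\{v_1,\dots,v_n\}$ and $m$ edges, and let $\tau(G;x)=d_2(xI_n-A(G))$, where $A(G)$ is the adjacency matrix of $G$. Then $$(m-n)\,\tau(G;x)+x\,\tau'(G;x)=\sum_{v_sv_t\in E(G)}\big[\tau(G-v_sv_t;x)+\tau(G-v_s-v_t;x)\big],$$ where $\tau'$ is the derivative with respect to $x$, $G-v_sv_t$ is $G$ with the edge $v_sv_t$ deleted, and $G-v_s-v_t$ is $G$ with the vertices $v_s,v_t$ deleted (so $\tau(G-v_s-v_t;x)=d_2(xI_{n-2}-A(G-v_s-v_t))$).
   Context: For an $k\times k$ matrix $M=(m_{ij})$ ($k\ge 2$), the second immanant is $d_2(M)=\sum_{\sigma\in S_k}\chi_2(\sigma)\prod_{s=1}^k m_{s\sigma(s)}$, where $\chi_2$ is the irreducible character of $S_k$ corresponding to the partition $(2,1^{k-2})$. It satisfies $d_2(X)=\sum_{i=1}^k x_{ii}\det(X(i))-\det(X)$, where $X(i)$ is $X$ with row and column $i$ deleted; for matrices of order less than $2$, $d_2$ is understood via this identity, with the determinant of the empty matrix equal to $1$. *)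

theory Defs
  imports "HOL-Combinatorics.Permutations" "HOL-Computational_Algebra.Polynomial"
begin

text \<open>The irreducible character of the symmetric group on a finite index set I
  corresponding to the partition (2,1^(k-2)), k = card I: it is the sign
  character times the standard character, i.e. chi_2(sigma) = sign(sigma) * (fix(sigma) - 1).\<close>
definition chi2 :: "'a set \<Rightarrow> ('a \<Rightarrow> 'a) \<Rightarrow> int" where
  "chi2 I \<sigma> = sign \<sigma> * (int (card {i \<in> I. \<sigma> i = i}) - 1)"

definition d2 :: "'a set \<Rightarrow> ('a \<Rightarrow> 'a \<Rightarrow> 'b::comm_ring_1) \<Rightarrow> 'b" where
  "d2 I M = (\<Sum>\<sigma> \<in> {\<sigma>. \<sigma> permutes I}. of_int (chi2 I \<sigma>) * (\<Prod>i\<in>I. M i (\<sigma> i)))"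

definition simple_graph :: "'a set \<Rightarrow> ('a \<Rightarrow> 'a \<Rightarrow> bool) \<Rightarrow> bool" where
  "simple_graph V E \<longleftrightarrow> finite V \<and> (\<forall>u v. E u v \<longrightarrow> u \<in> V \<and> v \<in> V)
     \<and> (\<forall>u v. E u v \<longrightarrow> E v u) \<and> (\<forall>u. \<not> E u u)"

definition edges :: "('a \<Rightarrow> 'a \<Rightarrow> bool) \<Rightarrow> 'a set set" where
  "edges E = {{u, v} | u v. E u v}"

definition adj_matrix :: "('a \<Rightarrow> 'a \<Rightarrow> bool) \<Rightarrow> 'a \<Rightarrow> 'a \<Rightarrow> real poly" where
  "adj_matrix E i j = (if E i j then 1 else 0)"

definition tau :: "'a set \<Rightarrow> ('a \<Rightarrow> 'a \<Rightarrow> bool) \<Rightarrow> real poly" where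
  "tau V E = d2 V (\<lambda>i j. (if i = j then [:0, 1:] else 0) - adj_matrix E i j)"

definition del_edge :: "('a \<Rightarrow> 'a \<Rightarrow> bool) \<Rightarrow> 'a set \<Rightarrow> 'a \<Rightarrow> 'a \<Rightarrow> bool" where
  "del_edge E e = (\<lambda>a b. E a b \<and> {a, b} \<noteq> e)"

definition del_verts :: "('a \<Rightarrow> 'a \<Rightarrow> bool) \<Rightarrow> 'a set \<Rightarrow> 'a \<Rightarrow> 'a \<Rightarrow> bool" where
  "del_verts E S = (\<lambda>a b. E a b \<and> a \<notin> S \<and> b \<notin> S)"

end

theory Submission
  imports Defs
begin

definition MM :: "('a \<Rightarrow> 'a \<Rightarrow> bool) \<Rightarrow> 'a \<Rightarrow> 'a \<Rightarrow> real poly" where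
  "MM E i j = (if i = j then [:0, 1:] else 0) - adj_matrix E i j"

definition pp :: "'a set \<Rightarrow> ('a \<Rightarrow> 'a \<Rightarrow> bool) \<Rightarrow> ('a \<Rightarrow> 'a) \<Rightarrow> real poly" where
  "pp V E \<sigma> = (\<Prod>i\<in>V. MM E i (\<sigma> i))"

lemma tau_alt: "tau V E = (\<Sum>\<sigma>\<in>{\<sigma>. \<sigma> permutes V}. smult (of_int (chi2 V \<sigma>)) (pp V E \<sigma>))"
  unfolding tau_def d2_def pp_def MM_def
  by (simp add: of_int_poly)

lemma const_prod: "finite A \<Longrightarrow> (\<Prod>i\<in>A. [:f i:]) = [:\<Prod>i\<in>A. f i:]"
  by (induction A rule: finite_induct) (auto simp: mult_ac)

lemma xpderiv: "[:0,1:] * pderiv ([:0,1:] ^ n * [:c:]) = smult (real n) ([:0,1:] ^ n * [:c:])"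
proof -
  have e: "[:0,1:] ^ n * [:c:] = monom c n" by (simp add: monom_altdef)
  have "[:0,1:] * pderiv (monom c n) = smult (real n) (monom c n)"
  proof (cases n)
    case 0 then show ?thesis by (simp add: pderiv_monom)
  next
    case (Suc k)
    have "[:0,1:] * monom a k = monom a (Suc k)" for a :: real
      by (simp add: monom_Suc)
    then show ?thesis using Suc by (simp add: pderiv_monom smult_monom)
  qed
  then show ?thesis unfolding e .
qed

lemma m1_poly: "(-1::real poly) = [:-1:]"
  by (metis minus_pCons minus_zero one_pCons)

lemma pp_deriv:
  assumes "simple_graph V E"
  shows "[:0,1:] * pderiv (pp V E \<sigma>) = smult (real (card {i\<in>V. \<sigma> i = i})) (pp V E \<sigma>)"
proof -
  have fin: "finite V" using assms by (simp add: simple_graph_def)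
  have irr: "\<not> E i i" for i using assms by (simp add: simple_graph_def)
  let ?F = "{i\<in>V. \<sigma> i = i}"
  let ?N = "V - {i. \<sigma> i = i}"
  have split: "pp V E \<sigma> = (\<Prod>i\<in>?F. MM E i (\<sigma> i)) * (\<Prod>i\<in>?N. MM E i (\<sigma> i))"
    unfolding pp_def using prod.Int_Diff[OF fin, of "\<lambda>i. MM E i (\<sigma> i)" "{i. \<sigma> i = i}"]
    by (simp only: Int_def mem_Collect_eq)
  also have "(\<Prod>i\<in>?F. MM E i (\<sigma> i)) = [:0,1:] ^ card ?F"
    by (simp add: MM_def adj_matrix_def irr)
  also have "(\<Prod>i\<in>?N. MM E i (\<sigma> i)) = (\<Prod>i\<in>?N. [:- (if E i (\<sigma> i) then 1 else 0):])"
    by (rule prod.cong) (auto simp: MM_def adj_matrix_def m1_poly)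
  also have "\<dots> = [:\<Prod>i\<in>?N. - (if E i (\<sigma> i) then 1 else 0):]"
    using fin by (simp add: const_prod)
  finally have "pp V E \<sigma> = [:0,1:] ^ card ?F * [:\<Prod>i\<in>?N. - (if E i (\<sigma> i) then 1 else 0):]" .
  then show ?thesis by (simp only: xpderiv)
qed

lemma pderiv_sum': "pderiv (\<Sum>x\<in>A. f x) = (\<Sum>x\<in>A. pderiv (f x))"
  by (induction A rule: infinite_finite_induct) (auto simp: pderiv_add)

lemma sum_if_const: "finite A \<Longrightarrow> (\<Sum>e\<in>A. if C e then q else 0) = smult (real (card {e\<in>A. C e})) (q :: real poly)"
  by (simp add: sum.inter_filter[symmetric] of_nat_poly)

lemma sg_facts:
  assumes "simple_graph V E"
  shows "finite V" "\<And>u v. E u v \<Longrightarrow> u \<in> V" "\<And>u v. E u v \<Longrightarrow> v \<in> V"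
    "\<And>u v. E u v \<Longrightarrow> E v u" "\<And>u. \<not> E u u"
  using assms by (auto simp: simple_graph_def)

lemma edgesE:
  assumes "simple_graph V E" "e \<in> edges E"
  obtains u v where "e = {u, v}" "E u v" "u \<noteq> v" "u \<in> V" "v \<in> V"
proof -
  from assms(2) obtain u v where uv: "e = {u, v}" "E u v" unfolding edges_def by blast
  then have "u \<noteq> v" "u \<in> V" "v \<in> V" using sg_facts[OF assms(1)] by metis+
  then show ?thesis using uv that by blast
qed

lemma finite_edges:
  assumes "simple_graph V E" shows "finite (edges E)"
proof -
  have "edges E \<subseteq> Pow V" using sg_facts[OF assms] unfolding edges_def by blast
  then show ?thesis using sg_facts(1)[OF assms] by (meson finite_Pow_iff finite_subset)
qed

lemma pp_del_edge:
  assumes sg: "simple_graph V E" and e: "e \<in> edges E"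
  shows "pp V (del_edge E e) \<sigma> = (if \<exists>i\<in>V. {i, \<sigma> i} = e then 0 else pp V E \<sigma>)"
proof -
  obtain u v where uv: "e = {u, v}" "E u v" "u \<noteq> v" using edgesE[OF sg e] by metis
  show ?thesis
  proof (cases "\<exists>i\<in>V. {i, \<sigma> i} = e")
    case True
    then obtain i where i: "i \<in> V" "{i, \<sigma> i} = e" by blast
    then have "i \<noteq> \<sigma> i" using uv by (auto simp: doubleton_eq_iff)
    then have "MM (del_edge E e) i (\<sigma> i) = 0"
      using i by (simp add: MM_def adj_matrix_def del_edge_def)
    then have "pp V (del_edge E e) \<sigma> = 0"
      unfolding pp_def using i sg_facts(1)[OF sg] by (metis prod_zero)
    then show ?thesis using True by simp
  next
    case False
    then have "pp V (del_edge E e) \<sigma> = pp V E \<sigma>"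
      unfolding pp_def by (intro prod.cong) (auto simp: MM_def adj_matrix_def del_edge_def)
    then show ?thesis using False by simp
  qed
qed

definition sw :: "('a \<Rightarrow> 'a) \<Rightarrow> 'a set \<Rightarrow> bool" where
  "sw \<sigma> e \<longleftrightarrow> (\<exists>a b. e = {a, b} \<and> \<sigma> a = b \<and> \<sigma> b = a)"

lemma chi2_transp:
  assumes fin: "finite V" and st: "s \<in> V" "t \<in> V" "s \<noteq> t" and p: "\<sigma>' permutes (V - {s, t})"
  shows "chi2 V (transpose s t \<circ> \<sigma>') = - chi2 (V - {s, t}) \<sigma>'"
proof -
  have perm1: "permutation (transpose s t)" using fin st
    by (meson permutation_permutes permutes_swap_id)
  have perm2: "permutation \<sigma>'" using p fin
    by (meson finite_Diff permutation_permutes)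
  have sg: "sign (transpose s t \<circ> \<sigma>') = - sign \<sigma>'"
    using sign_compose[OF perm1 perm2] st by (simp add: sign_swap_id)
  have ns: "\<sigma>' s = s" "\<sigma>' t = t" using p by (auto intro: permutes_not_in)
  have inV: "i \<in> V - {s, t} \<Longrightarrow> \<sigma>' i \<in> V - {s, t}" for i using permutes_in_image[OF p, of i] by blast
  have fx: "{i \<in> V. (transpose s t \<circ> \<sigma>') i = i} = {i \<in> V - {s, t}. \<sigma>' i = i}"
  proof (rule set_eqI, rule iffI)
    fix i assume "i \<in> {i \<in> V. (transpose s t \<circ> \<sigma>') i = i}"
    then have i: "i \<in> V" "transpose s t (\<sigma>' i) = i" by auto
    show "i \<in> {i \<in> V - {s, t}. \<sigma>' i = i}"
    proof (cases "i = s \<or> i = t")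
      case True then show ?thesis using i ns st by (auto simp: transpose_def)
    next
      case False
      then have "\<sigma>' i \<in> V - {s, t}" using inV i by auto
      then show ?thesis using i False by (auto simp: transpose_def split: if_splits)
    qed
  next
    fix i assume "i \<in> {i \<in> V - {s, t}. \<sigma>' i = i}"
    then show "i \<in> {i \<in> V. (transpose s t \<circ> \<sigma>') i = i}" by (auto simp: transpose_def)
  qed
  show ?thesis unfolding chi2_def sg fx by simp
qed

lemma pp_transp:
  assumes sg: "simple_graph V E" and st: "E s t" and p: "\<sigma>' permutes (V - {s, t})"
  shows "pp V E (transpose s t \<circ> \<sigma>') = pp (V - {s, t}) (del_verts E {s, t}) \<sigma>'"
proof -
  note f = sg_facts[OF sg]
  have s: "s \<in> V" "t \<in> V" "s \<noteq> t" "E t s"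
    using f(2)[OF st] f(3)[OF st] f(4)[OF st] f(5)[of s] st by auto
  have ns: "\<sigma>' s = s" "\<sigma>' t = t" using p by (auto intro: permutes_not_in)
  have inV: "i \<in> V - {s, t} \<Longrightarrow> \<sigma>' i \<in> V - {s, t}" for i using permutes_in_image[OF p, of i] by blast
  have V: "V = insert s (insert t (V - {s, t}))" using s by auto
  have "pp V E (transpose s t \<circ> \<sigma>') = MM E s t * (MM E t s * (\<Prod>i\<in>V - {s, t}. MM E i ((transpose s t \<circ> \<sigma>') i)))"
    unfolding pp_def using s ns f(1)
    by (subst V) (simp add: transpose_def)
  also have "MM E s t = -1" using s st by (auto simp: MM_def adj_matrix_def)
  also have "MM E t s = -1" using s st by (auto simp: MM_def adj_matrix_def)
  also have "(\<Prod>i\<in>V - {s, t}. MM E i ((transpose s t \<circ> \<sigma>') i)) = pp (V - {s, t}) (del_verts E {s, t}) \<sigma>'"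
    unfolding pp_def
  proof (rule prod.cong)
    fix i assume i: "i \<in> V - {s, t}"
    then have "\<sigma>' i \<in> V - {s, t}" using inV by blast
    then show "MM E i ((transpose s t \<circ> \<sigma>') i) = MM (del_verts E {s, t}) i (\<sigma>' i)"
      using i by (auto simp: MM_def adj_matrix_def del_verts_def transpose_def)
  qed simp
  finally show ?thesis by (simp add: comp_def)
qed


lemma sw_st:
  assumes "s \<noteq> t"
  shows "sw \<sigma> {s, t} \<longleftrightarrow> \<sigma> s = t \<and> \<sigma> t = s"
  unfolding sw_def using assms by (auto simp: doubleton_eq_iff)

lemma tau_del_verts:
  assumes sg: "simple_graph V E" and e: "e \<in> edges E"
  shows "tau (V - e) (del_verts E e) =
    (\<Sum>\<sigma>\<in>{\<sigma>. \<sigma> permutes V}. if sw \<sigma> e then - smult (of_int (chi2 V \<sigma>)) (pp V E \<sigma>) else 0)"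
proof -
  note f = sg_facts[OF sg]
  obtain s t where st: "e = {s, t}" "E s t" "s \<noteq> t" "s \<in> V" "t \<in> V" using edgesE[OF sg e] by metis
  let ?P = "{\<sigma>. \<sigma> permutes V}"
  let ?S = "{\<sigma>'. \<sigma>' permutes (V - {s, t})}"
  let ?T = "{\<sigma> \<in> ?P. \<sigma> s = t \<and> \<sigma> t = s}"
  have "(\<Sum>\<sigma>\<in>?P. if sw \<sigma> e then - smult (of_int (chi2 V \<sigma>)) (pp V E \<sigma>) else 0)
      = (\<Sum>\<sigma>\<in>?T. - smult (of_int (chi2 V \<sigma>)) (pp V E \<sigma>))"
    unfolding st(1) sw_st[OF st(3)]
    by (subst sum.inter_filter) (auto simp: finite_permutations f(1))
  also have "\<dots> = (\<Sum>\<sigma>'\<in>?S. smult (of_int (chi2 (V - {s, t}) \<sigma>')) (pp (V - {s, t}) (del_verts E {s, t}) \<sigma>'))"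
  proof (rule sym, rule sum.reindex_bij_witness[where i = "\<lambda>\<sigma>. transpose s t \<circ> \<sigma>" and j = "\<lambda>\<sigma>. transpose s t \<circ> \<sigma>"])
    fix a assume a: "a \<in> ?S"
    show "transpose s t \<circ> (transpose s t \<circ> a) = a" by (simp add: comp_assoc[symmetric])
    have ns: "a s = s" "a t = t" using a by (auto intro: permutes_not_in)
    have "a permutes V" using a by (auto intro: permutes_subset)
    then have "transpose s t \<circ> a permutes V" using st by (intro permutes_compose permutes_swap_id)
    then show "transpose s t \<circ> a \<in> ?T" using ns by simp
    show "- smult (of_int (chi2 V (transpose s t \<circ> a))) (pp V E (transpose s t \<circ> a)) =
        smult (of_int (chi2 (V - {s, t}) a)) (pp (V - {s, t}) (del_verts E {s, t}) a)"
      using chi2_transp[OF f(1) st(4,5,3)] pp_transp[OF sg st(2)] a by simp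
  next
    fix b assume b: "b \<in> ?T"
    show "transpose s t \<circ> (transpose s t \<circ> b) = b" by (simp add: comp_assoc[symmetric])
    have "transpose s t \<circ> b permutes V" using st b by (intro permutes_compose permutes_swap_id) auto
    moreover have "\<forall>x \<in> V - (V - {s, t}). (transpose s t \<circ> b) x = x"
      using b by auto
    ultimately show "transpose s t \<circ> b \<in> ?S" by (auto intro: permutes_superset)
  qed
  also have "\<dots> = tau (V - e) (del_verts E e)" by (simp only: tau_alt st(1))
  finally show ?thesis by (rule sym)
qed


lemma card_split_filter: "finite A \<Longrightarrow> card A = card {x\<in>A. P x} + card {x\<in>A. \<not> P x}"
proof -
  assume fin: "finite A"
  have "A = {x\<in>A. P x} \<union> {x\<in>A. \<not> P x}" by auto
  then have "card A = card ({x\<in>A. P x} \<union> {x\<in>A. \<not> P x})" by simp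
  also have "\<dots> = card {x\<in>A. P x} + card {x\<in>A. \<not> P x}"
    using fin by (intro card_Un_disjoint) auto
  finally show ?thesis .
qed

lemma count_lemma:
  assumes sg: "simple_graph V E" and p: "\<sigma> permutes V" and nz: "\<forall>i\<in>V. \<sigma> i \<noteq> i \<longrightarrow> E i (\<sigma> i)"
  shows "real (card (edges E)) - real (card V) + real (card {i\<in>V. \<sigma> i = i})
    = real (card {e\<in>edges E. \<not> (\<exists>i\<in>V. {i, \<sigma> i} = e)}) - real (card {e\<in>edges E. sw \<sigma> e})"
proof -
  note f = sg_facts[OF sg]
  define NF where "NF = {i\<in>V. \<sigma> i \<noteq> i}"
  define U where "U = {e\<in>edges E. \<exists>i\<in>V. {i, \<sigma> i} = e}"
  define T where "T = {e\<in>edges E. sw \<sigma> e}"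
  have finE: "finite (edges E)" by (rule finite_edges[OF sg])
  have finNF: "finite NF" using f(1) unfolding NF_def by simp
  have cV: "card V = card {i\<in>V. \<sigma> i = i} + card NF"
    unfolding NF_def using card_split_filter[OF f(1)] .
  have cE: "card (edges E) = card U + card {e\<in>edges E. \<not> (\<exists>i\<in>V. {i, \<sigma> i} = e)}"
    unfolding U_def using card_split_filter[OF finE] .
  have inV: "\<sigma> i \<in> V \<longleftrightarrow> i \<in> V" for i using permutes_in_image[OF p] .
  have TU: "T \<subseteq> U"
  proof
    fix e assume "e \<in> T"
    then have e: "e \<in> edges E" "sw \<sigma> e" unfolding T_def by auto
    obtain u v where uv: "e = {u, v}" "E u v" "u \<noteq> v" "u \<in> V" "v \<in> V" using edgesE[OF sg e(1)] by metis
    then have "\<sigma> u = v" using e(2) sw_st[OF uv(3)] by auto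
    then show "e \<in> U" unfolding U_def using e(1) uv by auto
  qed
  have Uim: "U = (\<lambda>i. {i, \<sigma> i}) ` NF"
  proof (rule set_eqI, rule iffI)
    fix e assume "e \<in> U"
    then obtain i where i: "e \<in> edges E" "i \<in> V" "{i, \<sigma> i} = e" unfolding U_def by auto
    obtain u v where uv: "e = {u, v}" "u \<noteq> v" using edgesE[OF sg i(1)] by metis
    have "\<sigma> i \<noteq> i" using i(3) uv by (auto simp: doubleton_eq_iff)
    then show "e \<in> (\<lambda>i. {i, \<sigma> i}) ` NF" using i unfolding NF_def by auto
  next
    fix e assume "e \<in> (\<lambda>i. {i, \<sigma> i}) ` NF"
    then obtain i where i: "i \<in> V" "\<sigma> i \<noteq> i" "e = {i, \<sigma> i}" unfolding NF_def by auto
    have "E i (\<sigma> i)" using nz i by auto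
    then have "e \<in> edges E" using i unfolding edges_def by auto
    then show "e \<in> U" using i unfolding U_def by auto
  qed
  have fib: "card {i\<in>NF. {i, \<sigma> i} = e} = (if e \<in> T then 2 else 1)" if e: "e \<in> U" for e
  proof -
    obtain a where a: "a \<in> V" "\<sigma> a \<noteq> a" "e = {a, \<sigma> a}" using e Uim unfolding NF_def by auto
    have eE: "e \<in> edges E" using e unfolding U_def by auto
    have Tiff: "e \<in> T \<longleftrightarrow> \<sigma> (\<sigma> a) = a"
      unfolding T_def using eE a sw_st[of a "\<sigma> a" \<sigma>] by auto
    show ?thesis
    proof (cases "\<sigma> (\<sigma> a) = a")
      case True
      have "{i\<in>NF. {i, \<sigma> i} = e} = {a, \<sigma> a}"
        using a True inV unfolding NF_def by (auto simp: doubleton_eq_iff)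
      then show ?thesis using Tiff True a by simp
    next
      case False
      have "{i\<in>NF. {i, \<sigma> i} = e} = {a}"
        using a False inV unfolding NF_def by (auto simp: doubleton_eq_iff)
      then show ?thesis using Tiff False by simp
    qed
  qed
  have "card NF = (\<Sum>i\<in>NF. (1::nat))" by simp
  also have "\<dots> = (\<Sum>e\<in>U. \<Sum>i\<in>{i\<in>NF. {i, \<sigma> i} = e}. 1)"
    unfolding Uim by (rule sum.image_gen[OF finNF])
  also have "\<dots> = (\<Sum>e\<in>U. if e \<in> T then 2 else 1)"
    by (rule sum.cong) (simp_all add: fib)
  also have "\<dots> = (\<Sum>e\<in>U. 1 + (if e \<in> T then 1 else 0))"
    by (rule sum.cong) auto
  also have "\<dots> = card U + card T"
  proof -
    have finU: "finite U" using finNF Uim by simp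
    have "(\<Sum>e\<in>U. (if e \<in> T then 1 else 0::nat)) = card {e\<in>U. e \<in> T}"
      using sum.inter_filter[OF finU, of "\<lambda>_. 1::nat" "\<lambda>e. e \<in> T"] by simp
    also have "{e\<in>U. e \<in> T} = T" using TU by auto
    finally have "(\<Sum>e\<in>U. (if e \<in> T then 1 else 0::nat)) = card T" .
    moreover have "(\<Sum>e\<in>U. 1 + (if e \<in> T then 1 else 0::nat)) = card U + (\<Sum>e\<in>U. (if e \<in> T then 1 else 0::nat))"
      by (simp only: sum.distrib) simp
    ultimately show ?thesis by simp
  qed
  finally have "card NF = card U + card T" .
  then show ?thesis using cV cE unfolding T_def by simp
qed


lemma smult_sum_right: "smult c (\<Sum>x\<in>A. f x) = (\<Sum>x\<in>A. smult c (f x))"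
  by (induction A rule: infinite_finite_induct) (auto simp: smult_add_right)

lemma mul_sum_right: "(p::real poly) * (\<Sum>x\<in>A. f x) = (\<Sum>x\<in>A. p * f x)"
  by (rule sum_distrib_left)

theorem lemma2p5:
  fixes V :: "'a set" and E :: "'a \<Rightarrow> 'a \<Rightarrow> bool"
  assumes "simple_graph V E"
  shows "smult (real (card (edges E)) - real (card V)) (tau V E) + [:0, 1:] * pderiv (tau V E)
         = (\<Sum>e \<in> edges E. tau V (del_edge E e) + tau (V - e) (del_verts E e))"
proof -
  note sg = assms
  note f = sg_facts[OF sg]
  let ?P = "{\<sigma>. \<sigma> permutes V}"
  define q where "q \<sigma> = smult (of_int (chi2 V \<sigma>)) (pp V E \<sigma>)" for \<sigma>
  define m where "m = real (card (edges E)) - real (card V)"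
  define a where "a \<sigma> = real (card {e\<in>edges E. \<not> (\<exists>i\<in>V. {i, \<sigma> i} = e)})" for \<sigma>
  define b where "b \<sigma> = real (card {e\<in>edges E. sw \<sigma> e})" for \<sigma>
  have finP: "finite ?P" using f(1) by (simp add: finite_permutations)
  have finE: "finite (edges E)" by (rule finite_edges[OF sg])
  have tauq: "tau V E = (\<Sum>\<sigma>\<in>?P. q \<sigma>)" unfolding tau_alt q_def ..
  have "smult m (tau V E) + [:0, 1:] * pderiv (tau V E)
      = (\<Sum>\<sigma>\<in>?P. smult m (q \<sigma>) + [:0, 1:] * pderiv (q \<sigma>))"
    unfolding tauq smult_sum_right pderiv_sum' mul_sum_right sum.distrib ..
  also have "\<dots> = (\<Sum>\<sigma>\<in>?P. smult (m + real (card {i\<in>V. \<sigma> i = i})) (q \<sigma>))"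
  proof (rule sum.cong)
    fix \<sigma> assume "\<sigma> \<in> ?P"
    have "[:0, 1:] * pderiv (q \<sigma>) = smult (of_int (chi2 V \<sigma>)) ([:0, 1:] * pderiv (pp V E \<sigma>))"
      unfolding q_def pderiv_smult by simp
    also have "\<dots> = smult (real (card {i\<in>V. \<sigma> i = i})) (q \<sigma>)"
      unfolding pp_deriv[OF sg] q_def by (simp add: mult.commute)
    finally show "smult m (q \<sigma>) + [:0, 1:] * pderiv (q \<sigma>) = smult (m + real (card {i\<in>V. \<sigma> i = i})) (q \<sigma>)"
      by (simp add: smult_add_left)
  qed simp
  also have "\<dots> = (\<Sum>\<sigma>\<in>?P. smult (a \<sigma> - b \<sigma>) (q \<sigma>))"
  proof (rule sum.cong)
    fix \<sigma> assume s: "\<sigma> \<in> ?P"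
    show "smult (m + real (card {i\<in>V. \<sigma> i = i})) (q \<sigma>) = smult (a \<sigma> - b \<sigma>) (q \<sigma>)"
    proof (cases "\<forall>i\<in>V. \<sigma> i \<noteq> i \<longrightarrow> E i (\<sigma> i)")
      case True
      then show ?thesis using count_lemma[OF sg _ True] s unfolding m_def a_def b_def by simp
    next
      case False
      then obtain i where i: "i \<in> V" "\<sigma> i \<noteq> i" "\<not> E i (\<sigma> i)" by blast
      then have "MM E i (\<sigma> i) = 0" by (simp add: MM_def adj_matrix_def)
      then have "pp V E \<sigma> = 0" unfolding pp_def using i f(1) by (metis prod_zero)
      then show ?thesis unfolding q_def by simp
    qed
  qed simp
  also have "\<dots> = (\<Sum>\<sigma>\<in>?P. \<Sum>e\<in>edges E. (if \<not> (\<exists>i\<in>V. {i, \<sigma> i} = e) then q \<sigma> else 0)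
                      + (if sw \<sigma> e then - q \<sigma> else 0))"
  proof (rule sum.cong)
    fix \<sigma> assume s: "\<sigma> \<in> ?P"
    have "(\<Sum>e\<in>edges E. (if \<not> (\<exists>i\<in>V. {i, \<sigma> i} = e) then q \<sigma> else 0)
                      + (if sw \<sigma> e then - q \<sigma> else 0))
        = smult (a \<sigma>) (q \<sigma>) + smult (b \<sigma>) (- q \<sigma>)"
      unfolding sum.distrib a_def b_def using sum_if_const[OF finE] by presburger
    then show "smult (a \<sigma> - b \<sigma>) (q \<sigma>) = (\<Sum>e\<in>edges E. (if \<not> (\<exists>i\<in>V. {i, \<sigma> i} = e) then q \<sigma> else 0)
                      + (if sw \<sigma> e then - q \<sigma> else 0))"
      by (simp add: smult_diff_left)
  qed simp
  also have "\<dots> = (\<Sum>e\<in>edges E. \<Sum>\<sigma>\<in>?P. (if \<not> (\<exists>i\<in>V. {i, \<sigma> i} = e) then q \<sigma> else 0)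
                      + (if sw \<sigma> e then - q \<sigma> else 0))"
    by (rule sum.swap)
  also have "\<dots> = (\<Sum>e \<in> edges E. tau V (del_edge E e) + tau (V - e) (del_verts E e))"
  proof (rule sum.cong)
    fix e assume e: "e \<in> edges E"
    have "tau V (del_edge E e) = (\<Sum>\<sigma>\<in>?P. if \<not> (\<exists>i\<in>V. {i, \<sigma> i} = e) then q \<sigma> else 0)"
      unfolding tau_alt q_def pp_del_edge[OF sg e]
      by (rule sum.cong) auto
    moreover have "tau (V - e) (del_verts E e) = (\<Sum>\<sigma>\<in>?P. if sw \<sigma> e then - q \<sigma> else 0)"
      unfolding tau_del_verts[OF sg e] q_def ..
    ultimately show "(\<Sum>\<sigma>\<in>?P. (if \<not> (\<exists>i\<in>V. {i, \<sigma> i} = e) then q \<sigma> else 0)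
                      + (if sw \<sigma> e then - q \<sigma> else 0)) = tau V (del_edge E e) + tau (V - e) (del_verts E e)"
      by (simp add: sum.distrib)
  qed simp
  finally show ?thesis unfolding m_def .
qed

end
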